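(* Let $G$ be a finite-by-abelian profinite group (i.e. $G$ has a finite normal subgroup $T$ with $G/T$ abelian). Then $G$ is central-by-finite, i.e. the center of $G$ has finite index in $G$. *)

theory Defs
  imports "HOL-Analysis.Analysis" "HOL-Algebra.Algebra"
begin

definition topological_group :: "('a, 'b) monoid_scheme \<Rightarrow> 'a topology \<Rightarrow> bool" where
  "topological_group G T \<longleftrightarrow>
     group G \<and> topspace T = carrier G \<and>
     continuous_map (prod_topology T T) T (\<lambda>(x, y). x \<otimes>\<^bsub>G\<^esub> y) \<and>
     continuous_map T T (\<lambda>x. inv\<^bsub>G\<^esub> x)"

definition totally_disconnected_space :: "'a topology \<Rightarrow> bool" where
  "totally_disconnected_space T \<longleftrightarrow>
     (\<forall>S. connectedin T S \<longrightarrow> S = {} \<or> (\<exists>x. S = {x}))"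

definition profinite_group :: "('a, 'b) monoid_scheme \<Rightarrow> 'a topology \<Rightarrow> bool" where
  "profinite_group G T \<longleftrightarrow>
     topological_group G T \<and> compact_space T \<and> Hausdorff_space T \<and>
     totally_disconnected_space T"

definition group_center :: "('a, 'b) monoid_scheme \<Rightarrow> 'a set" where
  "group_center G = {z \<in> carrier G. \<forall>g \<in> carrier G. z \<otimes>\<^bsub>G\<^esub> g = g \<otimes>\<^bsub>G\<^esub> z}"

end

theory Submission
  imports Defs
begin

lemma helper:
  fixes G (structure) and T :: "'a topology" and N :: "'a set"
  assumes "profinite_group G T"
    and "normal N G" and "finite N" and "comm_group (G Mod N)"
  shows "finite (rcosets (group_center G))"
proof -
  from assms(1) have grp: "group G" and top: "topspace T = carrier G"
    and cm: "continuous_map (prod_topology T T) T (\<lambda>(x, y). x \<otimes>\<^bsub>G\<^esub> y)"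
    and ci: "continuous_map T T (\<lambda>x. inv\<^bsub>G\<^esub> x)"
    and cpt: "compact_space T" and hs: "Hausdorff_space T"
    unfolding profinite_group_def topological_group_def by auto
  interpret group G by (rule grp)
  interpret N: normal N G by (rule assms(2))
  define c where "c = (\<lambda>p. (fst p \<otimes> snd p) \<otimes> inv (snd p \<otimes> fst p))"
  have comm: "c (x, y) \<in> N" if "x \<in> carrier G" "y \<in> carrier G" for x y
  proof -
    interpret Q: comm_group "G Mod N" by (rule assms(4))
    have "N #> x \<in> carrier (G Mod N)" "N #> y \<in> carrier (G Mod N)"
      using that by (auto simp: carrier_FactGroup)
    then have "(N #> x) <#> (N #> y) = (N #> y) <#> (N #> x)"
      using Q.m_comm by simp
    then have eq: "N #> (x \<otimes> y) = N #> (y \<otimes> x)"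
      using that N.rcos_sum by simp
    have "x \<otimes> y \<in> N #> (y \<otimes> x)"
      using eq rcos_self[of "x \<otimes> y" N] that N.subgroup_axioms by auto
    then show ?thesis
      using N.rcos_module_imp[OF grp, of "y \<otimes> x" "x \<otimes> y"] that by (simp add: c_def)
  qed
  have c_one: "c (x, y) = \<one> \<longleftrightarrow> x \<otimes> y = y \<otimes> x" if "x \<in> carrier G" "y \<in> carrier G" for x y
    using that by (metis c_def fst_conv snd_conv inv_equality m_closed r_inv inv_inv inv_closed)
  have cc: "continuous_map (prod_topology T T) T c"
  proof -
    have f1: "continuous_map (prod_topology T T) T (\<lambda>p. fst p \<otimes> snd p)"
      using cm by (simp add: case_prod_unfold)
    have f1': "continuous_map (prod_topology T T) T (\<lambda>p. snd p \<otimes> fst p)"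
      using continuous_map_compose[OF continuous_map_pairedI[OF continuous_map_snd continuous_map_fst] cm]
      by (simp add: o_def)
    have f2: "continuous_map (prod_topology T T) T (\<lambda>p. inv (snd p \<otimes> fst p))"
      using continuous_map_compose[OF f1' ci] by (simp add: o_def)
    show ?thesis
      using continuous_map_compose[OF continuous_map_pairedI[OF f1 f2] cm]
      by (simp add: o_def c_def)
  qed
  define K where "K = {p \<in> topspace (prod_topology T T). c p \<in> N - {\<one>}}"
  have "closedin T (N - {\<one>})"
    using Hausdorff_imp_t1_space[OF hs, unfolded t1_space_closedin_finite] assms(3) N.subset top by auto
  then have "closedin (prod_topology T T) K"
    unfolding K_def by (rule closedin_continuous_map_preimage[OF cc])
  then have "closedin T (fst ` K)"
    using closed_map_fst[OF cpt] unfolding closed_map_def by blast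
  then have opZ0: "openin T (topspace T - fst ` K)" by blast
  have Zeq: "topspace T - fst ` K = group_center G"
  proof
    show "topspace T - fst ` K \<subseteq> group_center G"
    proof
      fix x assume x: "x \<in> topspace T - fst ` K"
      have "x \<otimes> g = g \<otimes> x" if g: "g \<in> carrier G" for g
      proof (rule ccontr)
        assume "x \<otimes> g \<noteq> g \<otimes> x"
        then have "(x, g) \<in> K" using x g c_one comm top unfolding K_def by auto
        then show False using x by force
      qed
      then show "x \<in> group_center G" using x top by (auto simp: group_center_def)
    qed
  next
    show "group_center G \<subseteq> topspace T - fst ` K"
      using c_one top by (force simp: group_center_def K_def)
  qed
  have opZ: "openin T (group_center G)" using opZ0 Zeq by simp
  have sub: "subgroup (group_center G) G"
  proof
    show "group_center G \<subseteq> carrier G" by (auto simp: group_center_def)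
    show "\<one> \<in> group_center G" by (auto simp: group_center_def)
    fix x y assume x: "x \<in> group_center G" and y: "y \<in> group_center G"
    have xc: "x \<in> carrier G" and yc: "y \<in> carrier G"
      and xg: "\<And>g. g \<in> carrier G \<Longrightarrow> x \<otimes> g = g \<otimes> x"
      and yg: "\<And>g. g \<in> carrier G \<Longrightarrow> y \<otimes> g = g \<otimes> y"
      using x y by (auto simp: group_center_def)
    have "x \<otimes> y \<otimes> g = g \<otimes> (x \<otimes> y)" if g: "g \<in> carrier G" for g
    proof -
      have "x \<otimes> y \<otimes> g = x \<otimes> (g \<otimes> y)" using xc yc g yg m_assoc by simp
      also have "\<dots> = (x \<otimes> g) \<otimes> y" using xc yc g m_assoc by simp
      also have "\<dots> = (g \<otimes> x) \<otimes> y" using g xg by simp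
      also have "\<dots> = g \<otimes> (x \<otimes> y)" using xc yc g m_assoc by simp
      finally show ?thesis .
    qed
    then show "x \<otimes> y \<in> group_center G" using xc yc by (simp add: group_center_def)
    have "inv x \<otimes> g = g \<otimes> inv x" if g: "g \<in> carrier G" for g
    proof -
      have "inv x \<otimes> g = inv x \<otimes> (g \<otimes> x) \<otimes> inv x" using xc g m_assoc by (simp add: r_inv)
      also have "\<dots> = inv x \<otimes> (x \<otimes> g) \<otimes> inv x" using g xg by simp
      also have "\<dots> = g \<otimes> inv x" using xc g m_assoc by (simp add: l_inv flip: m_assoc)
      finally show ?thesis .
    qed
    then show "inv x \<in> group_center G" using xc by (simp add: group_center_def)
  qed
  define Z where "Z = group_center G"
  have opcos: "openin T (Z #> g)" if g: "g \<in> carrier G" for g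
  proof -
    have kc: "continuous_map T T (\<lambda>x. inv g)" using g top by simp
    have "continuous_map T T (\<lambda>x. x \<otimes> inv g)"
      using continuous_map_compose[OF continuous_map_pairedI[OF continuous_map_id kc] cm] g top
      by (simp add: o_def)
    then have "openin T {x \<in> topspace T. x \<otimes> inv g \<in> Z}"
      using openin_continuous_map_preimage opZ Z_def by blast
    moreover have "{x \<in> topspace T. x \<otimes> inv g \<in> Z} = Z #> g"
      using subgroup.rcos_module[OF sub grp g] top subgroup.elemrcos_carrier[OF sub grp g] Z_def by auto
    ultimately show ?thesis by simp
  qed
  have "compactin T (topspace T)" using cpt compact_space_def by blast
  moreover have "\<forall>B\<in>rcosets Z. openin T B" using opcos by (auto simp: RCOSETS_def)
  moreover have "topspace T \<subseteq> \<Union>(rcosets Z)" using rcosets_part_G[OF sub] top Z_def by simp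
  ultimately obtain F where F: "finite F" "F \<subseteq> rcosets Z" "topspace T \<subseteq> \<Union>F"
    unfolding compactin_def by meson
  have "rcosets Z \<subseteq> F"
  proof
    fix C assume C: "C \<in> rcosets Z"
    then obtain g where g: "g \<in> carrier G" "C = Z #> g" by (auto simp: RCOSETS_def)
    then have gC: "g \<in> C" using rcos_self[OF g(1) sub] Z_def by simp
    then obtain C' where C': "C' \<in> F" "g \<in> C'" using F(3) g top by auto
    have "pairwise disjnt (rcosets Z)" using rcos_disjoint[OF sub] Z_def by simp
    then have "C = C'" using C C' F(2) gC unfolding pairwise_def disjnt_def by blast
    then show "C \<in> F" using C' by simp
  qed
  then show ?thesis using F(1) finite_subset Z_def by blast
qed

theorem lemma2p7:
  fixes G :: "('a, 'b) monoid_scheme" and T :: "'a topology" and N :: "'a set"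
  assumes "profinite_group G T"
    and "normal N G" and "finite N" and "comm_group (G Mod N)"
  shows "finite (rcosets\<^bsub>G\<^esub> (group_center G))"
  using helper[OF assms] .

end
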